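(* Let $d\ge 2$ and $L\in\mathbb{N}$, and let $$P(\mathbf{x})=\prod_{j=1}^d\left[\sin^{2L}(\pi x_j/2)\sum_{k_j=0}^{L-1}\binom{2L-1}{k_j}\sin^{2(L-1-k_j)}(\pi x_j/2)\cos^{2k_j}(\pi x_j/2)\right],\qquad\mathbf{x}\in\mathbb{R}^d.$$ Then $P\chi_{[0,2]^d}$ satisfies the partition of unity condition $$\sum_{\mathbf{n}\in\mathbb{Z}^d}P(\mathbf{x}+\mathbf{n})\chi_{[0,2]^d}(\mathbf{x}+\mathbf{n})=1\quad\text{for all }\mathbf{x}\in\mathbb{R}^d,$$ and $P\chi_{[0,2]^d}\in C^{2L-1}(\mathbb{R}^d)$.
   Context: $\chi_{[0,2]^d}$ is the indicator function of $[0,2]^d$. $C^{m}(\mathbb{R}^d)$ denotes functions with continuous partial derivatives of all total orders at most $m$. *)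

theory Defs
  imports "HOL-Analysis.Analysis"
begin

definition Pfun :: "nat \<Rightarrow> real ^ 'n \<Rightarrow> real" where
  "Pfun L x = (\<Prod>j\<in>UNIV.
     (sin (pi * x $ j / 2)) ^ (2 * L) *
     (\<Sum>k<L. real ((2 * L - 1) choose k) *
        (sin (pi * x $ j / 2)) ^ (2 * (L - 1 - k)) * (cos (pi * x $ j / 2)) ^ (2 * k)))"

definition cube02 :: "(real ^ 'n) set" where
  "cube02 = {x. \<forall>i. 0 \<le> x $ i \<and> x $ i \<le> 2}"

definition int_lattice :: "(real ^ 'n) set" where
  "int_lattice = {n. \<forall>i. n $ i \<in> \<int>}"

definition partial_deriv :: "'n \<Rightarrow> (real ^ 'n \<Rightarrow> real) \<Rightarrow> real ^ 'n \<Rightarrow> real" where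
  "partial_deriv i f x = deriv (\<lambda>t. f (x + t *\<^sub>R axis i 1)) 0"

fun Cm :: "nat \<Rightarrow> (real ^ 'n \<Rightarrow> real) \<Rightarrow> bool" where
  "Cm 0 f \<longleftrightarrow> continuous_on UNIV f"
| "Cm (Suc m) f \<longleftrightarrow> continuous_on UNIV f \<and>
     (\<forall>i x. (\<lambda>t. f (x + t *\<^sub>R axis i 1)) differentiable (at 0)) \<and>
     (\<forall>i. Cm m (partial_deriv i f))"

end

theory Submission
  imports Defs
begin
fun diffn :: "nat \<Rightarrow> (real \<Rightarrow> real) \<Rightarrow> bool" where
  "diffn 0 f \<longleftrightarrow> continuous_on UNIV f"
| "diffn (Suc n) f \<longleftrightarrow> (\<exists>f'. (\<forall>x. (f has_real_derivative f' x) (at x)) \<and> diffn n f')"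

lemma diffn_cont: "diffn n f \<Longrightarrow> continuous_on UNIV f"
proof (cases n)
  case (Suc m)
  assume "diffn n f"
  then obtain f' where "\<forall>x. (f has_real_derivative f' x) (at x)" using Suc by auto
  then show ?thesis
    by (meson DERIV_isCont continuous_at_imp_continuous_on)
qed auto

lemma diffn_mono: "diffn (Suc n) f \<Longrightarrow> diffn n f"
proof (induction n arbitrary: f)
  case 0
  then show ?case using diffn_cont by (metis diffn.simps(1))
next
  case (Suc n)
  then obtain f' where "\<forall>x. (f has_real_derivative f' x) (at x)" "diffn (Suc n) f'" by auto
  then show ?case using Suc.IH by auto
qed

lemma diffn_mono_le: "diffn n f \<Longrightarrow> m \<le> n \<Longrightarrow> diffn m f"
proof (induction n arbitrary: m)
  case (Suc n)
  then show ?case using diffn_mono by (metis le_Suc_eq)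
qed auto

lemma diffn_const: "diffn n (\<lambda>_. c)"
proof (induction n arbitrary: c)
  case (Suc n)
  have "\<forall>x. ((\<lambda>_. c) has_real_derivative (\<lambda>_. 0) x) (at x)" by auto
  then show ?case using Suc[of 0] by (auto intro!: exI[of _ "\<lambda>_. 0"])
qed auto

lemma diffn_add: "diffn n f \<Longrightarrow> diffn n g \<Longrightarrow> diffn n (\<lambda>t. f t + g t)"
proof (induction n arbitrary: f g)
  case 0
  then show ?case by (auto intro: continuous_intros)
next
  case (Suc n)
  then obtain f' g' where "\<forall>x. (f has_real_derivative f' x) (at x)" "diffn n f'"
     "\<forall>x. (g has_real_derivative g' x) (at x)" "diffn n g'" by auto
  then show ?case using Suc.IH[of f' g'] by (auto intro!: exI[of _ "\<lambda>t. f' t + g' t"] derivative_intros)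
qed

lemma diffn_mult: "diffn n f \<Longrightarrow> diffn n g \<Longrightarrow> diffn n (\<lambda>t. f t * g t)"
proof (induction n arbitrary: f g)
  case 0
  then show ?case by (auto intro: continuous_intros)
next
  case (Suc n)
  then obtain f' g' where d: "\<forall>x. (f has_real_derivative f' x) (at x)" "diffn n f'"
     "\<forall>x. (g has_real_derivative g' x) (at x)" "diffn n g'" by auto
  have "diffn n f" "diffn n g" using Suc.prems diffn_mono by blast+
  then have "diffn n (\<lambda>t. f' t * g t + f t * g' t)"
    using Suc.IH d diffn_add by blast
  moreover have "\<forall>x. ((\<lambda>t. f t * g t) has_real_derivative (f' x * g x + f x * g' x)) (at x)"
    using d by (auto intro!: derivative_eq_intros)
  ultimately show ?case by auto
qed

lemma diffn_power: "diffn n f \<Longrightarrow> diffn n (\<lambda>t. f t ^ k)"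
  by (induction k) (auto intro: diffn_const diffn_mult)

lemma diffn_sum: "finite S \<Longrightarrow> (\<And>i. i \<in> S \<Longrightarrow> diffn n (f i)) \<Longrightarrow> diffn n (\<lambda>t. \<Sum>i\<in>S. f i t)"
  by (induction S rule: finite_induct) (auto intro: diffn_const diffn_add)

lemma diffn_sincos: "diffn n (\<lambda>t. sin (a*t+b)) \<and> diffn n (\<lambda>t. cos (a*t+b))"
proof (induction n)
  case 0
  then show ?case by (auto intro!: continuous_intros)
next
  case (Suc n)
  have "\<forall>x. ((\<lambda>t. sin (a*t+b)) has_real_derivative (a * cos (a*x+b))) (at x)"
    by (auto intro!: derivative_eq_intros)
  moreover have "\<forall>x. ((\<lambda>t. cos (a*t+b)) has_real_derivative (-a * sin (a*x+b))) (at x)"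
    by (auto intro!: derivative_eq_intros)
  moreover have "diffn n (\<lambda>t. a * cos (a*t+b))" "diffn n (\<lambda>t. -a * sin (a*t+b))"
    using Suc diffn_mult[OF diffn_const] by blast+
  ultimately show ?case by auto
qed

fun dvan :: "nat \<Rightarrow> (real \<Rightarrow> real) \<Rightarrow> bool" where
  "dvan 0 f \<longleftrightarrow> continuous_on UNIV f \<and> f 0 = 0 \<and> f 2 = 0"
| "dvan (Suc n) f \<longleftrightarrow> f 0 = 0 \<and> f 2 = 0 \<and> (\<exists>f'. (\<forall>x. (f has_real_derivative f' x) (at x)) \<and> dvan n f')"

lemma dvan_power:
  "k > n \<Longrightarrow> diffn n u \<Longrightarrow> u 0 = 0 \<Longrightarrow> u 2 = 0 \<Longrightarrow> diffn n q \<Longrightarrow> dvan n (\<lambda>t. u t ^ k * q t)"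
proof (induction n arbitrary: k q)
  case 0
  then show ?case by (auto intro!: continuous_intros dest: diffn_cont)
next
  case (Suc n)
  then obtain j where k: "k = Suc j" by (cases k) auto
  from Suc.prems obtain u' q' where d: "\<forall>x. (u has_real_derivative u' x) (at x)" "diffn n u'"
     "\<forall>x. (q has_real_derivative q' x) (at x)" "diffn n q'" by auto
  have un: "diffn n u" "diffn n q" using Suc.prems diffn_mono by blast+
  define r where "r = (\<lambda>t. real k * u' t * q t + u t * q' t)"
  have "diffn n r" unfolding r_def
    by (intro diffn_add diffn_mult diffn_const un d)
  then have "dvan n (\<lambda>t. u t ^ j * r t)"
    using Suc.IH[of j r] Suc.prems k un by auto
  moreover have "\<forall>x. ((\<lambda>t. u t ^ k * q t) has_real_derivative (u x ^ j * r x)) (at x)"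
  proof
    fix x
      have "((\<lambda>t. u t ^ k * q t) has_real_derivative (real k * u x ^ (k - 1) * u' x * q x + u x ^ k * q' x)) (at x)"
        using d by (auto intro!: derivative_eq_intros)
      moreover have "real k * u x ^ (k - 1) * u' x * q x + u x ^ k * q' x = u x ^ j * r x"
        unfolding r_def k by (simp add: algebra_simps)
      ultimately show "((\<lambda>t. u t ^ k * q t) has_real_derivative (u x ^ j * r x)) (at x)" by simp
  qed
  ultimately show ?case using Suc.prems k by auto
qed

lemma cont_cut:
  fixes p :: "real \<Rightarrow> real"
  assumes "continuous_on UNIV p" "p 0 = 0" "p 2 = 0"
  shows "continuous_on UNIV (\<lambda>t. p t * indicator {0..2::real} t)"
proof -
  have U: "UNIV = {..0::real} \<union> ({0..2} \<union> {2..})" by auto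
  have c1: "continuous_on {..0} (\<lambda>t. p t * indicator {0..2::real} t)"
    by (rule continuous_on_eq[OF continuous_on_const[of "{..0}" "0::real"]]) (auto simp: assms indicator_def)
  have c2: "continuous_on {0..2} (\<lambda>t. p t * indicator {0..2::real} t)"
    by (rule continuous_on_eq[OF continuous_on_subset[OF assms(1)]]) (auto simp: assms indicator_def)
  have c3: "continuous_on {2..} (\<lambda>t. p t * indicator {0..2::real} t)"
    by (rule continuous_on_eq[OF continuous_on_const[of "{2..}" "0::real"]]) (auto simp: assms indicator_def)
  show ?thesis
    by (subst U, intro continuous_on_closed_Un c1 c2 c3) auto
qed

lemma deriv_split:
  assumes "(f has_field_derivative D) (at x within {..x::real})" "(f has_field_derivative D) (at x within {x..})"
  shows "(f has_field_derivative D) (at x)"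
proof -
  have "((\<lambda>y. (f y - f x) / (y - x)) \<longlongrightarrow> D) (at x within ({..x} \<union> {x..}))"
    using assms unfolding has_field_derivative_iff Lim_within_Un by simp
  moreover have "{..x} \<union> {x..} = UNIV" by auto
  ultimately show ?thesis unfolding has_field_derivative_iff by simp
qed

lemma deriv_cut:
  assumes d: "\<forall>x. (p has_real_derivative p' x) (at x)" and z: "p 0 = 0" "p 2 = 0" "p' 0 = 0" "p' 2 = 0"
  shows "((\<lambda>t. p t * indicator {0..2::real} t) has_real_derivative (p' x * indicator {0..2::real} x)) (at x)"
proof -
  let ?g = "\<lambda>t. p t * indicator {0..2::real} t"
  have zero: "((\<lambda>_. 0) has_real_derivative 0) (at y within S)" for y S by simp
  consider "x < 0" | "x = 0" | "0 < x \<and> x < 2" | "x = 2" | "x > 2" by linarith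
  then show ?thesis
  proof cases
    case 1
    have "(?g has_real_derivative 0) (at x)"
      by (rule has_field_derivative_transform_within_open[OF zero, of "{..<0}"]) (use 1 in \<open>auto simp: indicator_def\<close>)
    then show ?thesis using 1 by (simp add: indicator_def)
  next
    case 5
    have "(?g has_real_derivative 0) (at x)"
      by (rule has_field_derivative_transform_within_open[OF zero, of "{2<..}"]) (use 5 in \<open>auto simp: indicator_def\<close>)
    then show ?thesis using 5 by (simp add: indicator_def)
  next
    case 3
    have "(?g has_real_derivative p' x) (at x)"
      by (rule has_field_derivative_transform_within_open[OF d[rule_format], of "{0<..<2}"]) (use 3 in \<open>auto simp: indicator_def\<close>)
    then show ?thesis using 3 by (simp add: indicator_def)
  next
    case 2
    have a: "(?g has_real_derivative 0) (at x within {..x})"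
      by (rule has_field_derivative_transform_within[OF zero, of 1]) (use 2 z in \<open>auto simp: indicator_def\<close>)
    have b: "(?g has_real_derivative 0) (at x within {x..})"
      using has_field_derivative_transform_within[OF has_field_derivative_at_within[OF d[rule_format, of x]], of 1 "{x..}" ?g]
      using 2 z by (auto simp: indicator_def dist_real_def)
    show ?thesis using deriv_split[OF a b] 2 z by simp
  next
    case 4
    have a: "(?g has_real_derivative 0) (at x within {x..})"
      by (rule has_field_derivative_transform_within[OF zero, of 1]) (use 4 z in \<open>auto simp: indicator_def\<close>)
    have b: "(?g has_real_derivative 0) (at x within {..x})"
      using has_field_derivative_transform_within[OF has_field_derivative_at_within[OF d[rule_format, of x]], of 1 "{..x}" ?g]
      using 4 z by (auto simp: indicator_def dist_real_def)
    show ?thesis using deriv_split[OF b a] 4 z by simp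
  qed
qed

lemma dvan_cut: "dvan n p \<Longrightarrow> diffn n (\<lambda>t. p t * indicator {0..2::real} t)"
proof (induction n arbitrary: p)
  case 0
  then show ?case using cont_cut by auto
next
  case (Suc n)
  then obtain p' where d: "\<forall>x. (p has_real_derivative p' x) (at x)" "dvan n p'" and z: "p 0 = 0" "p 2 = 0"
    by auto
  have "p' 0 = 0 \<and> p' 2 = 0" using d(2) by (cases n) auto
  then have "\<forall>x. ((\<lambda>t. p t * indicator {0..2::real} t) has_real_derivative (p' x * indicator {0..2::real} x)) (at x)"
    using deriv_cut d z by blast
  then show ?case using Suc.IH[OF d(2)] by auto
qed

lemma alg:
  fixes a b :: real
  assumes ab: "a + b = 1" and L: "L \<ge> 1"
  shows "a^L * (\<Sum>k<L. real ((2*L-1) choose k) * a^(L-1-k) * b^k)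
       + b^L * (\<Sum>k<L. real ((2*L-1) choose k) * b^(L-1-k) * a^k) = 1"
proof -
  define n where "n = 2*L-1"
  define f where "f k = real (n choose k) * a^k * b^(n-k)" for k
  have s1: "a^L * (\<Sum>k<L. real (n choose k) * a^(L-1-k) * b^k) = (\<Sum>k<L. real (n choose k) * a^(n-k) * b^k)"
    unfolding sum_distrib_left
  proof (rule sum.cong)
    fix k assume "k \<in> {..<L}"
    then have "n - k = L + (L-1-k)" unfolding n_def by auto
    then show "a ^ L * (real (n choose k) * a ^ (L - 1 - k) * b ^ k) = real (n choose k) * a^(n-k) * b^k"
      by (simp add: power_add)
  qed simp
  have s2: "b^L * (\<Sum>k<L. real (n choose k) * b^(L-1-k) * a^k) = (\<Sum>k<L. f k)"
    unfolding sum_distrib_left f_def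
  proof (rule sum.cong)
    fix k assume "k \<in> {..<L}"
    then have "n - k = L + (L-1-k)" unfolding n_def by auto
    then show "b ^ L * (real (n choose k) * b ^ (L - 1 - k) * a ^ k) = real (n choose k) * a^k * b^(n-k)"
      by (simp add: power_add)
  qed simp
  have e: "real (n choose k) * a^(n-k) * b^k = f (n - k)" if "k < L" for k
    unfolding f_def n_def using binomial_symmetric[of k "2*L-1"] that by auto
  have s3: "(\<Sum>k<L. real (n choose k) * a^(n-k) * b^k) = (\<Sum>k\<in>{L..n}. f k)"
    apply (rule sum.reindex_bij_witness[of _ "\<lambda>j. n - j" "\<lambda>k. n - k"])
    using L by (auto simp: e, auto simp: n_def)
  have "(\<Sum>k\<le>n. f k) = (\<Sum>k<L. f k) + (\<Sum>k\<in>{L..n}. f k)"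
  proof -
    have "{..n} = {..<L} \<union> {L..n}" unfolding n_def using L by auto
    then show ?thesis by (simp add: sum.union_disjoint ivl_disj_int)
  qed
  moreover have "(\<Sum>k\<le>n. f k) = 1"
    unfolding f_def using binomial_ring[of a b n] ab by simp
  ultimately show ?thesis using s1 s2 s3 unfolding n_def by linarith
qed

definition g1 :: "nat \<Rightarrow> real \<Rightarrow> real" where
  "g1 L t = (sin (pi * t / 2)) ^ (2 * L) *
     (\<Sum>k<L. real ((2 * L - 1) choose k) *
        (sin (pi * t / 2)) ^ (2 * (L - 1 - k)) * (cos (pi * t / 2)) ^ (2 * k))"

lemma g1_sc: "g1 L t = ((sin (pi*t/2))^2)^L * (\<Sum>k<L. real ((2 * L - 1) choose k) *
        ((sin (pi * t / 2))^2) ^ (L - 1 - k) * ((cos (pi * t / 2))^2) ^ k)"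
  unfolding g1_def by (simp add: power_mult)

lemma g1_shift: assumes "L \<ge> 1" shows "g1 L t + g1 L (t + 1) = 1"
proof -
  have s: "sin (pi * (t+1) / 2) = cos (pi*t/2)" and c: "cos (pi * (t+1) / 2) = - sin (pi*t/2)"
    by (simp_all add: distrib_left add_divide_distrib sin_add cos_add)
  have "(sin (pi*t/2))^2 + (cos (pi*t/2))^2 = 1" by simp
  from alg[OF this assms] show ?thesis unfolding g1_sc s c by (simp add: mult.commute)
qed

lemma g1_0: "L \<ge> 1 \<Longrightarrow> g1 L 0 = 0" unfolding g1_def by simp
lemma g1_2: "L \<ge> 1 \<Longrightarrow> g1 L 2 = 0" unfolding g1_def by simp
lemma g1_1: "L \<ge> 1 \<Longrightarrow> g1 L 1 = 1" using g1_shift[of L 0] g1_0 by simp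

lemma g1_dvan: assumes "L \<ge> 1" shows "dvan (2*L-1) (g1 L)"
proof -
  have u: "(\<lambda>t. sin (pi*t/2)) = (\<lambda>t. sin ((pi/2)*t + 0))" and c: "(\<lambda>t. cos (pi*t/2)) = (\<lambda>t. cos ((pi/2)*t + 0))"
    by auto
  have du: "diffn n (\<lambda>t. sin (pi*t/2))" for n unfolding u using diffn_sincos by blast
  have dc: "diffn n (\<lambda>t. cos (pi*t/2))" for n unfolding c using diffn_sincos by blast
  have dq: "diffn n (\<lambda>t. \<Sum>k<L. real ((2 * L - 1) choose k) *
        (sin (pi * t / 2)) ^ (2 * (L - 1 - k)) * (cos (pi * t / 2)) ^ (2 * k))" for n
    by (intro diffn_sum diffn_mult diffn_const diffn_power du dc) auto
  have "dvan (2*L-1) (\<lambda>t. (sin (pi * t / 2)) ^ (2 * L) * (\<Sum>k<L. real ((2 * L - 1) choose k) *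
        (sin (pi * t / 2)) ^ (2 * (L - 1 - k)) * (cos (pi * t / 2)) ^ (2 * k)))"
    by (rule dvan_power[OF _ du _ _ dq]) (use assms in auto)
  then show ?thesis unfolding g1_def[abs_def] .
qed

lemma prod_cont:
  fixes G :: "'n::finite \<Rightarrow> real \<Rightarrow> real"
  shows "(\<forall>j. continuous_on UNIV (G j)) \<Longrightarrow> continuous_on UNIV (\<lambda>x::real^'n. \<Prod>j\<in>UNIV. G j (x$j))"
proof -
  assume a: "\<forall>j. continuous_on UNIV (G j)"
  have "continuous_on UNIV (\<lambda>x::real^'n. G j (x$j))" for j
    by (rule continuous_on_compose2[OF a[rule_format]]) (auto intro: continuous_intros)
  then show ?thesis by (auto intro!: continuous_intros)
qed

lemma Cm_prod: "(\<forall>j. diffn m (G j)) \<Longrightarrow> Cm m (\<lambda>x::real^'n. \<Prod>j\<in>UNIV. G j (x$j))"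
proof (induction m arbitrary: G)
  case 0
  then show ?case using prod_cont by simp
next
  case (Suc m)
  have cont: "continuous_on UNIV (\<lambda>x::real^'n. \<Prod>j\<in>UNIV. G j (x$j))"
    using prod_cont Suc.prems diffn_cont by blast
  have "\<forall>j. \<exists>g. (\<forall>x. (G j has_real_derivative g x) (at x)) \<and> diffn m g" using Suc.prems by auto
  then obtain G' where G': "\<And>j x. (G j has_real_derivative G' j x) (at x)" "\<And>j. diffn m (G' j)"
    by metis
  have dm: "diffn m (G j)" for j using Suc.prems diffn_mono by blast
  define F where "F = (\<lambda>x::real^'n. \<Prod>j\<in>UNIV. G j (x$j))"
  have line: "(\<lambda>t. F (x + t *\<^sub>R axis i 1)) = (\<lambda>t. G i (x$i + t) * (\<Prod>j\<in>UNIV-{i}. G j (x$j)))" for x i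
  proof
    fix t
    have "F (x + t *\<^sub>R axis i 1) = G i ((x + t *\<^sub>R axis i 1)$i) * (\<Prod>j\<in>UNIV-{i}. G j ((x + t *\<^sub>R axis i 1)$j))"
      unfolding F_def by (rule prod.remove) auto
    also have "(\<Prod>j\<in>UNIV-{i}. G j ((x + t *\<^sub>R axis i 1)$j)) = (\<Prod>j\<in>UNIV-{i}. G j (x$j))"
      by (rule prod.cong) (auto simp: axis_def)
    finally show "F (x + t *\<^sub>R axis i 1) = G i (x$i + t) * (\<Prod>j\<in>UNIV-{i}. G j (x$j))"
      by (simp add: axis_def)
  qed
  have der: "((\<lambda>t. F (x + t *\<^sub>R axis i 1)) has_real_derivative G' i (x$i) * (\<Prod>j\<in>UNIV-{i}. G j (x$j))) (at 0)" for x i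
  proof -
    have "((\<lambda>t. G i (x$i + t)) has_real_derivative G' i (x$i)) (at 0)"
      using DERIV_shift[of "G i" "G' i (x$i)" 0 "x$i"] G'(1)[of i "x$i"] by (simp add: add.commute)
    then show ?thesis unfolding line by (rule DERIV_cmult_right)
  qed
  have pd: "partial_deriv i F = (\<lambda>x. \<Prod>j\<in>UNIV. (G(i := G' i)) j (x$j))" for i
  proof
    fix x
    have "partial_deriv i F x = G' i (x$i) * (\<Prod>j\<in>UNIV-{i}. G j (x$j))"
      unfolding partial_deriv_def using der by (rule DERIV_imp_deriv)
    also have "\<dots> = (\<Prod>j\<in>UNIV. (G(i := G' i)) j (x$j))"
      by (subst prod.remove[of UNIV i]) (auto intro!: prod.cong)
    finally show "partial_deriv i F x = (\<Prod>j\<in>UNIV. (G(i := G' i)) j (x$j))" .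
  qed
  have "Cm m (partial_deriv i F)" for i
    unfolding pd by (rule Suc.IH) (auto simp: G'(2) dm)
  moreover have "(\<lambda>t. F (x + t *\<^sub>R axis i 1)) differentiable (at 0)" for x i
    using der[of x i] unfolding differentiable_def has_field_derivative_def by blast
  ultimately show ?case using cont unfolding F_def by simp
qed

lemma A_eq: "{k::real. k \<in> \<int> \<and> y + k \<in> {0..2}} = of_int ` {\<lceil>-y\<rceil>..\<lfloor>2-y\<rfloor>}"
proof (rule set_eqI, rule iffI)
  fix k :: real assume "k \<in> {k::real. k \<in> \<int> \<and> y + k \<in> {0..2}}"
  then obtain j where "k = of_int j" "0 \<le> y + of_int j" "y + of_int j \<le> 2" by (auto elim: Ints_cases)
  then show "k \<in> of_int ` {\<lceil>-y\<rceil>..\<lfloor>2-y\<rfloor>}"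
    by (auto simp: ceiling_le_iff le_floor_iff)
next
  fix k :: real assume "k \<in> of_int ` {\<lceil>-y\<rceil>..\<lfloor>2-y\<rfloor>}"
  then obtain j where "k = of_int j" "\<lceil>-y\<rceil> \<le> j" "j \<le> \<lfloor>2-y\<rfloor>" by auto
  then show "k \<in> {k::real. k \<in> \<int> \<and> y + k \<in> {0..2}}"
    by (auto simp: ceiling_le_iff le_floor_iff)
qed

lemma unity1:
  assumes L: "L \<ge> 1"
  shows "finite {k::real. k \<in> \<int> \<and> y + k \<in> {0..2}} \<and>
    (\<Sum>k\<in>{k::real. k \<in> \<int> \<and> y + k \<in> {0..2}}. g1 L (y+k) * indicator {0..2} (y+k)) = 1"
proof -
  let ?A = "{k::real. k \<in> \<int> \<and> y + k \<in> {0..2}}"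
  have "(\<Sum>k\<in>?A. g1 L (y+k) * indicator {0..2} (y+k)) = (\<Sum>k\<in>?A. g1 L (y+k))"
    by (rule sum.cong) auto
  also have "\<dots> = (\<Sum>j\<in>{\<lceil>-y\<rceil>..\<lfloor>2-y\<rfloor>}. g1 L (y + of_int j))"
    unfolding A_eq by (subst sum.reindex) (auto simp: inj_on_def)
  also have "\<dots> = 1"
  proof (cases "y \<in> \<int>")
    case True
    then obtain m where m: "y = of_int m" by (auto elim: Ints_cases)
    have "\<lceil>-y\<rceil> = -m" "\<lfloor>2-y\<rfloor> = 2 - m" unfolding m by (simp_all add: ceiling_minus)
    moreover have "{-m..2-m} = {-m, -m+1, -m+2}" by auto
    ultimately show ?thesis using g1_0[OF L] g1_1[OF L] g1_2[OF L] m by simp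
  next
    case False
    define m where "m = \<lfloor>y\<rfloor>"
    have lt: "of_int m < y" "y < of_int m + 1" using False unfolding m_def
      by (metis Ints_of_int floor_less_iff less_eq_real_def of_int_floor_le) (simp)
    have c: "\<lceil>-y\<rceil> = -m" unfolding m_def by (simp add: ceiling_minus)
    have f: "\<lfloor>2-y\<rfloor> = 1 - m"
      using lt by (intro floor_unique) auto
    have e: "{-m..1-m} = {-m, -m+1}" by auto
    have "g1 L (y - of_int m) + g1 L (y - of_int m + 1) = 1" using g1_shift[OF L] by blast
    then show ?thesis unfolding c f e by (simp add: algebra_simps)
  qed
  finally show ?thesis unfolding A_eq by auto
qed

theorem corollary3p4:
  fixes L :: nat
  assumes "CARD('n::finite) \<ge> 2" and "L \<ge> 1"
  shows "((\<forall>x :: real ^ 'n.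
           ((\<lambda>n. Pfun L (x + n) * indicator cube02 (x + n)) has_sum 1) int_lattice) \<and>
         Cm (2 * L - 1) (\<lambda>x :: real ^ 'n. Pfun L x * indicator cube02 x))"
proof -
  let ?h = "\<lambda>t. g1 L t * indicator {0..2::real} t"
  have P: "Pfun L x = (\<Prod>j\<in>UNIV. g1 L (x$j))" for x :: "real^'n"
    unfolding Pfun_def g1_def by simp
  have I: "indicator cube02 x = (\<Prod>j\<in>UNIV. indicator {0..2::real} (x$j) :: real)" for x :: "real^'n"
  proof (cases "x \<in> cube02")
    case True
    then show ?thesis by (simp add: cube02_def indicator_def)
  next
    case False
    then obtain j where "x$j \<notin> {0..2}" by (auto simp: cube02_def)
    then have "(\<Prod>j\<in>UNIV. indicator {0..2::real} (x$j) :: real) = 0"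
      by (subst prod_zero_iff) (auto intro!: exI[of _ j])
    then show ?thesis using False by simp
  qed
  have F: "(\<lambda>x. Pfun L x * indicator cube02 x) = (\<lambda>x::real^'n. \<Prod>j\<in>UNIV. ?h (x$j))"
    by (auto simp: P I prod.distrib)
  have C: "Cm (2 * L - 1) (\<lambda>x :: real ^ 'n. Pfun L x * indicator cube02 x)"
    unfolding F by (rule Cm_prod) (use dvan_cut g1_dvan assms(2) in blast)
  have U: "((\<lambda>n. Pfun L (x + n) * indicator cube02 (x + n)) has_sum 1) int_lattice" for x :: "real^'n"
  proof -
    define f where "f = (\<lambda>n::real^'n. \<Prod>j\<in>UNIV. ?h (x$j + n$j))"
    have eq: "(\<lambda>n. Pfun L (x + n) * indicator cube02 (x + n)) = f"
    proof
      fix n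
      show "Pfun L (x + n) * indicator cube02 (x + n) = f n"
        unfolding f_def using fun_cong[OF F, of "x + n"] by simp
    qed
    define A where "A j = {k::real. k \<in> \<int> \<and> x$j + k \<in> {0..2}}" for j
    have u1: "finite (A j) \<and> (\<Sum>k\<in>A j. ?h (x$j + k)) = 1" for j
      unfolding A_def using unity1[OF assms(2)] by blast
    define S where "S = (vec_lambda ` (PiE UNIV A) :: (real^'n) set)"
    have finS: "finite S" unfolding S_def using u1 by (intro finite_imageI finite_PiE) auto
    have Smem: "n \<in> S \<longleftrightarrow> (\<forall>j. n$j \<in> A j)" for n
    proof
      assume "n \<in> S" then show "\<forall>j. n$j \<in> A j" unfolding S_def by (auto simp: PiE_iff)
    next
      assume "\<forall>j. n$j \<in> A j"
      then have "vec_nth n \<in> PiE UNIV A" by (auto simp: PiE_iff)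
      then show "n \<in> S" unfolding S_def by (metis image_eqI vec_nth_inverse)
    qed
    have "sum f S = (\<Sum>g\<in>PiE UNIV A. \<Prod>j\<in>UNIV. ?h (x$j + g j))"
      unfolding S_def f_def
      by (subst sum.reindex) (auto simp: inj_on_def vec_lambda_inject)
    also have "\<dots> = (\<Prod>j\<in>UNIV. \<Sum>k\<in>A j. ?h (x$j + k))"
      by (rule prod_sum_PiE[symmetric]) (use u1 in auto)
    also have "\<dots> = 1" using u1 by simp
    finally have "(f has_sum 1) S" using finS by (intro has_sum_finiteI) auto
    moreover have "f n = 0" if "n \<in> int_lattice - S" for n
    proof -
      from that obtain j where "n$j \<notin> A j" "n$j \<in> \<int>" by (auto simp: Smem int_lattice_def)
      then have "?h (x$j + n$j) = 0" unfolding A_def by auto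
      then show ?thesis unfolding f_def by (subst prod_zero_iff) auto
    qed
    moreover have "S \<subseteq> int_lattice" by (auto simp: Smem A_def int_lattice_def)
    ultimately show ?thesis unfolding eq
      using has_sum_cong_neutral[where S=S and T=int_lattice and f=f and g=f and x=1] by blast
  qed
  show ?thesis using U C by blast
qed

end
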